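(* A *-homomorphism $h:A\to B$ between C*-algebras reflects commutativity if and only if the induced monotone map $C(h):C(A)\to C(B)$, $D\mapsto h(D)$, has a right adjoint.
   Context: All C*-algebras are unital. $C(A)$ is the poset of commutative C*-subalgebras of $A$ ordered by inclusion. A *-homomorphism $h$ reflects commutativity if for all $x,y\in A$, $[h(x),h(y)]=0$ implies $[x,y]=0$. *)

theory Defs
  imports "HOL-Analysis.Analysis"
begin

class cstar_algebra = real_normed_algebra_1 + banach +
  fixes scaleC :: "complex \<Rightarrow> 'a \<Rightarrow> 'a"
    and cstar :: "'a \<Rightarrow> 'a"
  assumes scaleC_of_real: "scaleC (complex_of_real r) x = scaleR r x"
    and scaleC_add_right: "scaleC a (x + y) = scaleC a x + scaleC a y"
    and scaleC_add_left: "scaleC (a + b) x = scaleC a x + scaleC b x"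
    and scaleC_scaleC: "scaleC a (scaleC b x) = scaleC (a * b) x"
    and scaleC_one: "scaleC 1 x = x"
    and norm_scaleC: "norm (scaleC a x) = cmod a * norm x"
    and scaleC_mult_left: "scaleC a x * y = scaleC a (x * y)"
    and scaleC_mult_right: "x * scaleC a y = scaleC a (x * y)"
    and cstar_add: "cstar (x + y) = cstar x + cstar y"
    and cstar_scaleC: "cstar (scaleC a x) = scaleC (cnj a) (cstar x)"
    and cstar_mult: "cstar (x * y) = cstar y * cstar x"
    and cstar_cstar: "cstar (cstar x) = x"
    and cstar_identity: "norm (cstar x * x) = norm x ^ 2"

definition star_hom :: "('a::cstar_algebra \<Rightarrow> 'b::cstar_algebra) \<Rightarrow> bool" where
  "star_hom h \<longleftrightarrow>
     (\<forall>x y. h (x + y) = h x + h y) \<and>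
     (\<forall>c x. h (scaleC c x) = scaleC c (h x)) \<and>
     (\<forall>x y. h (x * y) = h x * h y) \<and>
     (\<forall>x. h (cstar x) = cstar (h x)) \<and>
     h 1 = 1"

definition cstar_subalgebra :: "'a::cstar_algebra set \<Rightarrow> bool" where
  "cstar_subalgebra D \<longleftrightarrow>
     1 \<in> D \<and>
     (\<forall>x\<in>D. \<forall>y\<in>D. x + y \<in> D) \<and>
     (\<forall>c. \<forall>x\<in>D. scaleC c x \<in> D) \<and>
     (\<forall>x\<in>D. \<forall>y\<in>D. x * y \<in> D) \<and>
     (\<forall>x\<in>D. cstar x \<in> D) \<and>
     closed D"

definition comm_subalgebras :: "'a::cstar_algebra set set" where
  "comm_subalgebras = {D. cstar_subalgebra D \<and> (\<forall>x\<in>D. \<forall>y\<in>D. x * y = y * x)}"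

definition reflects_commutativity :: "('a::cstar_algebra \<Rightarrow> 'b::cstar_algebra) \<Rightarrow> bool" where
  "reflects_commutativity h \<longleftrightarrow>
     (\<forall>x y. h x * h y = h y * h x \<longrightarrow> x * y = y * x)"

definition C_map :: "('a::cstar_algebra \<Rightarrow> 'b::cstar_algebra) \<Rightarrow> 'a set \<Rightarrow> 'b set" where
  "C_map h D = h ` D"

definition has_right_adjoint :: "'a set set \<Rightarrow> 'b set set \<Rightarrow> ('a set \<Rightarrow> 'b set) \<Rightarrow> bool" where
  "has_right_adjoint P Q f \<longleftrightarrow>
     (\<exists>g. (\<forall>y\<in>Q. g y \<in> P) \<and> (\<forall>x\<in>P. \<forall>y\<in>Q. f x \<subseteq> y \<longleftrightarrow> x \<subseteq> g y))"

end

theory Submission imports Defs "HOL-Computational_Algebra.Formal_Power_Series" begin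

lemma scaleC_zero_left[simp]: "scaleC 0 (x::'a::cstar_algebra) = 0"
  using scaleC_of_real[of 0 x] by simp
lemma scaleC_zero_right[simp]: "scaleC c (0::'a::cstar_algebra) = 0"
  using scaleC_add_right[of c "0::'a" 0] by simp
lemma scaleC_minus_right: "scaleC c (- (x::'a::cstar_algebra)) = - scaleC c x"
  using scaleC_add_right[of c x "-x"] by (simp add: add_eq_0_iff)
lemma scaleC_diff_right: "scaleC c ((x::'a::cstar_algebra) - y) = scaleC c x - scaleC c y"
  using scaleC_add_right[of c x "-y"] scaleC_minus_right[of c y] by simp
lemma cstar_zero[simp]: "cstar (0::'a::cstar_algebra) = 0"
  using cstar_add[of "0::'a" 0] by simp
lemma cstar_minus: "cstar (- (x::'a::cstar_algebra)) = - cstar x"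
  using cstar_add[of x "-x"] by (simp add: add_eq_0_iff)
lemma cstar_diff: "cstar ((x::'a::cstar_algebra) - y) = cstar x - cstar y"
  using cstar_add[of x "-y"] cstar_minus[of y] by simp
lemma cstar_one[simp]: "cstar (1::'a::cstar_algebra) = 1"
proof -
  have "cstar (cstar (1::'a) * 1) = cstar 1 * cstar (cstar 1)" by (rule cstar_mult)
  then show ?thesis by (simp add: cstar_cstar)
qed
lemma cstar_scaleR: "cstar (scaleR r (x::'a::cstar_algebra)) = scaleR r (cstar x)"
  using cstar_scaleC[of "complex_of_real r" x] by (simp add: scaleC_of_real[symmetric])
lemma norm_cstar[simp]: "norm (cstar (x::'a::cstar_algebra)) = norm x"
proof -
  have le: "norm y \<le> norm (cstar y)" for y :: 'a
  proof (cases "y = 0")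
    case False
    have "norm y ^ 2 = norm (cstar y * y)" by (simp add: cstar_identity)
    also have "\<dots> \<le> norm (cstar y) * norm y" by (rule norm_mult_ineq)
    finally have "norm y * norm y \<le> norm (cstar y) * norm y" by (simp add: power2_eq_square)
    then show ?thesis using False by simp
  qed simp
  show ?thesis using le[of x] le[of "cstar x"] by (simp add: cstar_cstar)
qed
lemma bounded_linear_cstar: "bounded_linear (cstar :: 'a::cstar_algebra \<Rightarrow> 'a)"
  by (rule bounded_linear_intro[where K=1]) (auto simp: cstar_add cstar_scaleR)
lemma cstar_power: "cstar ((x::'a::cstar_algebra) ^ n) = cstar x ^ n"
  by (induction n) (simp_all add: cstar_mult power_commutes)

lemma scaleC_i_cancel: "scaleC \<i> (x::'a::cstar_algebra) + scaleC (-\<i>) x = 0"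
  using scaleC_add_left[of "\<i>" "-\<i>" x] by simp

lemma gchoose_half_bound: "\<bar>(1/2::real) gchoose n\<bar> \<le> 1"
proof (induction n)
  case (Suc n)
  have e: "(1/2::real) gchoose Suc n = ((1/2 - real n) / real (Suc n)) * ((1/2) gchoose n)"
    using gbinomial_mult_1[of "1/2::real" n] by (simp add: field_simps)
  have "\<bar>(1/2 - real n) / real (Suc n)\<bar> \<le> 1" by (simp add: abs_le_iff divide_le_eq_1)
  then show ?case unfolding e abs_mult using Suc abs_ge_zero
    by (metis mult_le_one)
qed simp

definition sqc :: "nat \<Rightarrow> real" where "sqc n = ((1/2::real) gchoose n) * (-1)^n"

lemma sqc_conv: "(\<Sum>i\<le>k. sqc i * sqc (k - i)) = (if k = 0 then 1 else if k = 1 then -1 else 0)"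
proof -
  have "(\<Sum>i\<le>k. sqc i * sqc (k - i)) = (\<Sum>i\<le>k. (-1)^k * (((1/2::real) gchoose i) * ((1/2) gchoose (k - i))))"
    by (rule sum.cong) (auto simp: sqc_def power_add[symmetric])
  also have "\<dots> = (-1)^k * (\<Sum>i=0..k. ((1/2::real) gchoose i) * ((1/2) gchoose (k - i)))"
    by (simp add: sum_distrib_left atMost_atLeast0)
  also have "\<dots> = (-1)^k * ((1::real) gchoose k)"
    using gbinomial_Vandermonde[of "1/2::real" "1/2" k] by simp
  also have "(1::real) gchoose k = of_nat (1 choose k)"
    using binomial_gbinomial[of 1 k, where 'a=real] by simp
  finally show ?thesis
    by (cases k) (auto simp: binomial_eq_0)
qed

lemma sqrt_exists:
  fixes y :: "'a::cstar_algebra"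
  assumes ny: "norm y < 1"
  shows "\<exists>c. c * c = 1 - y \<and> (cstar y = y \<longrightarrow> cstar c = c) \<and> (\<forall>z. z * y = y * z \<longrightarrow> z * c = c * z)"
proof -
  define a where "a k = sqc k *\<^sub>R y ^ k" for k
  have nb: "norm (a k) \<le> norm y ^ k" for k
  proof -
    have "norm (a k) = \<bar>sqc k\<bar> * norm (y ^ k)" by (simp add: a_def)
    also have "\<dots> \<le> 1 * norm y ^ k"
      by (rule mult_mono) (auto simp: sqc_def abs_mult gchoose_half_bound norm_power_ineq)
    finally show ?thesis by simp
  qed
  have sn: "summable (\<lambda>k. norm (a k))"
    by (rule summable_comparison_test'[where g="\<lambda>k. norm y ^ k"]) (use nb ny in \<open>auto intro: summable_geometric\<close>)
  have sa: "summable a" using sn summable_norm_cancel by blast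
  define c where "c = (\<Sum>k. a k)"
  have cp: "(\<lambda>k. \<Sum>i\<le>k. a i * a (k - i)) sums (c * c)"
    unfolding c_def by (rule Cauchy_product_sums[OF sn sn])
  have terms: "(\<Sum>i\<le>k. a i * a (k - i)) = (if k = 0 then 1 else 0) + (if k = 1 then - y else 0)" for k
  proof -
    have "(\<Sum>i\<le>k. a i * a (k - i)) = (\<Sum>i\<le>k. (sqc i * sqc (k - i)) *\<^sub>R y ^ k)"
      by (rule sum.cong) (auto simp: a_def power_add[symmetric])
    also have "\<dots> = (\<Sum>i\<le>k. sqc i * sqc (k - i)) *\<^sub>R y ^ k"
      by (simp add: scaleR_sum_left)
    finally show ?thesis by (simp add: sqc_conv)
  qed
  have "(\<lambda>k. (if k = 0 then 1 else 0) + (if k = 1 then - y else 0)) sums (1 + - y)"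
    by (rule sums_add) (use sums_single[of 0 "\<lambda>_. 1::'a"] sums_single[of 1 "\<lambda>_. -y"] in auto)
  then have cc: "c * c = 1 - y" using cp terms sums_unique2 by fastforce
  have sa2: "a sums c" using sa c_def summable_sums by blast
  have adj: "cstar c = c" if "cstar y = y"
  proof -
    have "(\<lambda>k. cstar (a k)) sums cstar c" by (rule bounded_linear.sums[OF bounded_linear_cstar sa2])
    moreover have "cstar (a k) = a k" for k by (simp add: a_def cstar_scaleR cstar_power that)
    ultimately show ?thesis using sa2 sums_unique2 by fastforce
  qed
  have com: "z * c = c * z" if "z * y = y * z" for z
  proof -
    have pc: "z * y ^ k = y ^ k * z" for k
      by (induction k) (simp_all add: that mult.assoc[symmetric] power_commutes, simp add: mult.assoc)
    have "(\<lambda>k. z * a k) sums (z * c)" by (rule bounded_linear.sums[OF bounded_linear_mult_right sa2])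
    moreover have "(\<lambda>k. a k * z) sums (c * z)" by (rule bounded_linear.sums[OF bounded_linear_mult_left sa2])
    moreover have "z * a k = a k * z" for k by (simp add: a_def pc)
    ultimately show ?thesis using sums_unique2 by fastforce
  qed
  show ?thesis using cc adj com by blast
qed

context
  fixes h :: "'a::cstar_algebra \<Rightarrow> 'b::cstar_algebra"
  assumes sh: "star_hom h"
begin

lemma sh_add: "h (x + y) = h x + h y" using sh by (simp add: star_hom_def)
lemma sh_scaleC: "h (scaleC c x) = scaleC c (h x)" using sh by (simp add: star_hom_def)
lemma sh_mult: "h (x * y) = h x * h y" using sh by (simp add: star_hom_def)
lemma sh_cstar: "h (cstar x) = cstar (h x)" using sh by (simp add: star_hom_def)
lemma sh_one: "h 1 = 1" using sh by (simp add: star_hom_def)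
lemma sh_zero: "h 0 = 0" using sh_add[of 0 0] by simp
lemma sh_minus: "h (- x) = - h x" using sh_add[of x "-x"] sh_zero by (simp add: add_eq_0_iff)
lemma sh_diff: "h (x - y) = h x - h y" using sh_add[of x "-y"] sh_minus[of y] by simp
lemma sh_scaleR: "h (scaleR r x) = scaleR r (h x)"
  using sh_scaleC[of "complex_of_real r" x] by (simp add: scaleC_of_real)

lemma sh_selfadj_bound:
  assumes sa: "cstar x = x" and nx: "norm x < 1"
  shows "norm (h x) \<le> 1"
proof -
  have "norm (x * x) \<le> norm x * norm x" by (rule norm_mult_ineq)
  also have "\<dots> < 1" using nx mult_left_le_one_le[of "norm x" "norm x"] by simp
  finally obtain c where cc: "c * c = 1 - x * x" and cs: "cstar c = c" and cx: "x * c = c * x"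
    using sqrt_exists[of "x * x"] sa by (metis cstar_mult mult.assoc)
  define u where "u = x + scaleC \<i> c"
  have cu: "cstar u = x + scaleC (-\<i>) c" by (simp add: u_def cstar_add cstar_scaleC sa cs)
  have "cstar u * u = x * x + (scaleC \<i> (x * c) + scaleC (-\<i>) (c * x)) + scaleC (-\<i> * \<i>) (c * c)"
    unfolding cu by (simp add: u_def distrib_left distrib_right scaleC_mult_left scaleC_mult_right scaleC_scaleC add.assoc scaleC_add_right)
  also have "\<dots> = 1"
    using scaleC_i_cancel[of "c * x"] by (simp add: cx cc scaleC_one)
  finally have uu: "cstar u * u = 1" .
  have "norm (h u) ^ 2 = norm (cstar (h u) * h u)" by (simp add: cstar_identity)
  also have "\<dots> = 1" by (simp add: sh_cstar[symmetric] sh_mult[symmetric] uu sh_one)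
  finally have nu: "norm (h u) = 1" using norm_ge_zero[of "h u"] power2_eq_1_iff[of "norm (h u)"] by linarith
  have "u + cstar u = x + x" unfolding cu unfolding u_def using scaleC_i_cancel[of c] by (simp add: algebra_simps)
  then have "h x + h x = h u + cstar (h u)" by (simp add: sh_add[symmetric] sh_cstar[symmetric])
  then have "norm (h x + h x) \<le> 2" using norm_triangle_ineq[of "h u" "cstar (h u)"] nu by simp
  moreover have "h x + h x = 2 *\<^sub>R h x" by (simp add: scaleR_2)
  ultimately show ?thesis by simp
qed

lemma sh_norm_bound: "norm (h a) \<le> 2 * norm a"
proof (cases "a = 0")
  case True then show ?thesis by (simp add: sh_zero)
next
  case False
  define t where "t = 2 * norm a"
  have t: "t > 0" using False by (simp add: t_def)
  define a' where "a' = (1/t) *\<^sub>R a"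
  have na': "norm a' = 1/2" using False by (simp add: a'_def t_def)
  define x where "x = cstar a' * a'"
  have xs: "cstar x = x" by (simp add: x_def cstar_mult cstar_cstar)
  have nx: "norm x = 1/4" by (simp add: x_def cstar_identity na' power2_eq_square)
  have "norm (h a') ^ 2 = norm (h x)" by (simp add: x_def sh_mult sh_cstar cstar_identity)
  also have "\<dots> \<le> 1" using sh_selfadj_bound[OF xs] nx by simp
  finally have "norm (h a') \<le> 1" by (simp add: power_le_one_iff abs_le_square_iff) 
  moreover have "h a' = (1/t) *\<^sub>R h a" by (simp add: a'_def sh_scaleR)
  ultimately show ?thesis using t by (simp add: t_def field_simps)
qed

lemma sh_bounded_linear: "bounded_linear h"
  by (rule bounded_linear_intro[where K=2]) (auto simp: sh_add sh_scaleR, metis sh_norm_bound mult.commute)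

lemma sh_continuous: "continuous_on UNIV h"
  by (simp add: linear_continuous_on sh_bounded_linear)

end


definition comm :: "'a::cstar_algebra set \<Rightarrow> 'a set" where
  "comm S = {z. \<forall>s\<in>S. z * s = s * z}"

lemma comm_subalg:
  fixes S :: "'a::cstar_algebra set"
  assumes sc: "\<forall>s\<in>S. cstar s \<in> S"
  shows "cstar_subalgebra (comm S)"
  unfolding cstar_subalgebra_def
proof (intro conjI ballI allI)
  show "1 \<in> comm S" by (simp add: comm_def)
  show "x + y \<in> comm S" if "x \<in> comm S" "y \<in> comm S" for x y
    using that by (simp add: comm_def distrib_left distrib_right)
  show "scaleC c x \<in> comm S" if "x \<in> comm S" for c x
    using that by (simp add: comm_def scaleC_mult_left scaleC_mult_right)
  show "x * y \<in> comm S" if "x \<in> comm S" "y \<in> comm S" for x y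
    using that by (simp add: comm_def) (metis mult.assoc)
  show "cstar x \<in> comm S" if "x \<in> comm S" for x
  proof -
    have "cstar x * s = s * cstar x" if "s \<in> S" for s
    proof -
      have "x * cstar s = cstar s * x" using \<open>x \<in> comm S\<close> sc that by (simp add: comm_def)
      then have "cstar (x * cstar s) = cstar (cstar s * x)" by simp
      then show ?thesis by (simp add: cstar_mult cstar_cstar)
    qed
    then show ?thesis by (simp add: comm_def)
  qed
  have "comm S = (\<Inter>s\<in>S. {z. z * s = s * z})" by (auto simp: comm_def)
  moreover have "closed {z. z * s = s * z}" for s :: 'a
    by (rule closed_Collect_eq) (intro continuous_intros)+
  ultimately show "closed (comm S)" by (simp add: closed_INT)
qed

lemma comm_star_closed: "\<forall>s\<in>S. cstar s \<in> S \<Longrightarrow> \<forall>s\<in>comm S. cstar s \<in> comm (S::'a::cstar_algebra set)"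
  using comm_subalg unfolding cstar_subalgebra_def by blast

lemma bicomm:
  fixes S :: "'a::cstar_algebra set"
  assumes sc: "\<forall>s\<in>S. cstar s \<in> S" and cm: "\<forall>x\<in>S. \<forall>y\<in>S. x * y = y * x"
  shows "comm (comm S) \<in> comm_subalgebras" "S \<subseteq> comm (comm S)"
proof -
  show sub: "S \<subseteq> comm (comm S)" by (auto simp: comm_def)
  have "S \<subseteq> comm S" using cm by (auto simp: comm_def)
  then have "comm (comm S) \<subseteq> comm S" by (auto simp: comm_def)
  then have "\<forall>x\<in>comm (comm S). \<forall>y\<in>comm (comm S). x * y = y * x"
  proof (intro ballI)
    fix x y assume "x \<in> comm (comm S)" "y \<in> comm (comm S)"
    moreover have "y \<in> comm S" using \<open>comm (comm S) \<subseteq> comm S\<close> \<open>y \<in> comm (comm S)\<close> by blast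
    ultimately show "x * y = y * x" unfolding comm_def by blast
  qed
  then show "comm (comm S) \<in> comm_subalgebras"
    using comm_subalg[OF comm_star_closed[OF sc]] by (simp add: comm_subalgebras_def)
qed

lemma subalg_Int: "cstar_subalgebra D1 \<Longrightarrow> cstar_subalgebra D2 \<Longrightarrow> cstar_subalgebra (D1 \<inter> D2)"
  by (simp add: cstar_subalgebra_def closed_Int)

definition scalars :: "'a::cstar_algebra set" where "scalars = range (\<lambda>c. scaleC c 1)"

lemma scalars_subalg: "cstar_subalgebra (scalars :: 'a::cstar_algebra set)"
  unfolding cstar_subalgebra_def scalars_def
proof (intro conjI ballI allI)
  show "(1::'a) \<in> range (\<lambda>c. scaleC c 1)" using scaleC_one[of "1::'a"] by (metis rangeI)
  show "x + y \<in> range (\<lambda>c. scaleC c (1::'a))" if "x \<in> range (\<lambda>c. scaleC c 1)" "y \<in> range (\<lambda>c. scaleC c 1)" for x y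
    using that by (auto simp: scaleC_add_left[symmetric])
  show "scaleC a x \<in> range (\<lambda>c. scaleC c (1::'a))" if "x \<in> range (\<lambda>c. scaleC c 1)" for a x
    using that by (auto simp: scaleC_scaleC)
  show "x * y \<in> range (\<lambda>c. scaleC c (1::'a))" if "x \<in> range (\<lambda>c. scaleC c 1)" "y \<in> range (\<lambda>c. scaleC c 1)" for x y
    using that by (auto simp: scaleC_mult_left scaleC_mult_right scaleC_scaleC)
  show "cstar x \<in> range (\<lambda>c. scaleC c (1::'a))" if "x \<in> range (\<lambda>c. scaleC c 1)" for x
    using that by (auto simp: cstar_scaleC)
  have bl: "bounded_linear (\<lambda>c. scaleC c (1::'a))"
  proof (rule bounded_linear_intro[where K=1])
    show "scaleC (x + y) (1::'a) = scaleC x 1 + scaleC y 1" for x y by (rule scaleC_add_left)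
    show "scaleC (r *\<^sub>R x) (1::'a) = r *\<^sub>R scaleC x 1" for r x
      by (simp add: scaleC_of_real[symmetric] scaleC_scaleC scaleR_conv_of_real)
    show "norm (scaleC x (1::'a)) \<le> norm x * 1" for x by (simp add: norm_scaleC)
  qed
  have "complete (range (\<lambda>c. scaleC c (1::'a)))"
    by (rule complete_isometric_image[where e=1, OF _ subspace_UNIV bl]) (auto simp: norm_scaleC complete_UNIV)
  then show "closed (range (\<lambda>c. scaleC c (1::'a)))" by (rule complete_imp_closed)
qed

lemma scalars_sub: "cstar_subalgebra E \<Longrightarrow> scalars \<subseteq> E"
  by (auto simp: cstar_subalgebra_def scalars_def)

lemma vimage_subalg:
  fixes h :: "'a::cstar_algebra \<Rightarrow> 'b::cstar_algebra"
  assumes sh: "star_hom h" and E: "cstar_subalgebra E"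
  shows "cstar_subalgebra (h -` E)"
proof -
  have "closed (h -` E \<inter> UNIV)"
    using continuous_on_closed_vimage[of UNIV h] sh_continuous[OF sh] E
    by (simp add: cstar_subalgebra_def)
  then show ?thesis using E
    by (simp add: cstar_subalgebra_def sh_add[OF sh] sh_scaleC[OF sh] sh_mult[OF sh] sh_cstar[OF sh] sh_one[OF sh])
qed


lemma double_cancel: "(a::'a::real_vector) + a = b + b \<Longrightarrow> a = b"
  by (metis scaleR_2 scaleR_cancel_left zero_neq_numeral)

lemma decomp_commute:
  fixes q z :: "'a::cstar_algebra"
  assumes "q * (z + cstar z) = (z + cstar z) * q"
    and "q * scaleC (-\<i>) (cstar z - z) = scaleC (-\<i>) (cstar z - z) * q"
  shows "q * z = z * q"
proof -
  have e: "z + z = (z + cstar z) - scaleC \<i> (scaleC (-\<i>) (cstar z - z))"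
    by (simp add: scaleC_scaleC scaleC_one)
  have gen: "q * (s - scaleC \<i> w) = (s - scaleC \<i> w) * q" if "q * s = s * q" "q * w = w * q" for s w
    by (simp add: right_diff_distrib left_diff_distrib scaleC_mult_left scaleC_mult_right that)
  have "q * (z + z) = (z + z) * q"
    by (subst (1 2) e) (rule gen[OF assms])
  then have "q * z + q * z = z * q + z * q" by (simp only: distrib_left distrib_right)
  then show ?thesis by (rule double_cancel)
qed

lemma decomp_sa:
  fixes z :: "'a::cstar_algebra"
  shows "cstar (z + cstar z) = z + cstar z" "cstar (scaleC (-\<i>) (cstar z - z)) = scaleC (-\<i>) (cstar z - z)"
proof -
  show "cstar (z + cstar z) = z + cstar z" by (simp add: cstar_add cstar_cstar)
  have "cstar (scaleC (-\<i>) (cstar z - z)) = scaleC \<i> (z - cstar z)"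
    by (simp add: cstar_scaleC cstar_diff cstar_cstar)
  also have "\<dots> = scaleC (-\<i>) (cstar z - z)"
    using scaleC_scaleC[of "\<i>" "-1" "cstar z - z"] scaleC_of_real[of "-1" "cstar z - z"]
    by simp
  finally show "cstar (scaleC (-\<i>) (cstar z - z)) = scaleC (-\<i>) (cstar z - z)" .
qed

theorem mainTheorem7:
  fixes h :: "'a::cstar_algebra \<Rightarrow> 'b::cstar_algebra"
  assumes "star_hom h"
  shows "reflects_commutativity h \<longleftrightarrow>
         has_right_adjoint comm_subalgebras comm_subalgebras (C_map h)"
proof
  assume rc: "reflects_commutativity h"
  show "has_right_adjoint comm_subalgebras comm_subalgebras (C_map h)"
    unfolding has_right_adjoint_def
  proof (intro exI[of _ "\<lambda>E. h -` E"] conjI ballI)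
    fix E :: "'b set" assume "E \<in> comm_subalgebras"
    then show "h -` E \<in> comm_subalgebras"
      using vimage_subalg[OF assms] rc
      by (auto simp: comm_subalgebras_def reflects_commutativity_def)
  next
    fix D E show "C_map h D \<subseteq> E \<longleftrightarrow> D \<subseteq> h -` E" by (auto simp: C_map_def)
  qed
next
  assume "has_right_adjoint comm_subalgebras comm_subalgebras (C_map h)"
  then obtain g where gP: "\<And>E. E \<in> comm_subalgebras \<Longrightarrow> g E \<in> comm_subalgebras"
    and adj: "\<And>D E. D \<in> comm_subalgebras \<Longrightarrow> E \<in> comm_subalgebras \<Longrightarrow> C_map h D \<subseteq> E \<longleftrightarrow> D \<subseteq> g E"
    unfolding has_right_adjoint_def by blast
  have ksa: "x * y = y * x" if xs: "cstar x = x" and ys: "cstar y = y" and hx: "h x = 0" for x y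
  proof -
    define Dy where "Dy = comm (comm {y})"
    have Dy: "Dy \<in> comm_subalgebras" "y \<in> Dy" using bicomm[of "{y}"] ys by (auto simp: Dy_def)
    have Dysa: "\<forall>s\<in>Dy. cstar s \<in> Dy" "\<forall>a\<in>Dy. \<forall>b\<in>Dy. a * b = b * a"
      using Dy(1) by (auto simp: comm_subalgebras_def cstar_subalgebra_def)
    define E where "E = comm (comm (h ` Dy))"
    have E: "E \<in> comm_subalgebras" "h ` Dy \<subseteq> E"
      using bicomm[of "h ` Dy"] Dysa by (auto simp: E_def sh_cstar[OF assms, symmetric] sh_mult[OF assms, symmetric])
    define Dx where "Dx = h -` scalars \<inter> comm (comm {x})"
    have bx: "comm (comm {x}) \<in> comm_subalgebras" using bicomm[of "{x}"] xs by auto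
    have Dx: "Dx \<in> comm_subalgebras"
      using subalg_Int[OF vimage_subalg[OF assms scalars_subalg]] bx
      by (auto simp: Dx_def comm_subalgebras_def)
    have "h x \<in> scalars" using hx scaleC_zero_left[of "1::'b"] by (metis rangeI scalars_def)
    then have xD: "x \<in> Dx" using bicomm[of "{x}"] xs by (auto simp: Dx_def)
    have "C_map h Dx \<subseteq> E"
      using scalars_sub[of E] E(1) by (auto simp: C_map_def Dx_def comm_subalgebras_def)
    then have "Dx \<subseteq> g E" using adj[OF Dx E(1)] by blast
    moreover have "Dy \<subseteq> g E" using adj[OF Dy(1) E(1)] E(2) by (simp add: C_map_def)
    moreover have "g E \<in> comm_subalgebras" using gP[OF E(1)] .
    ultimately show ?thesis using xD Dy(2) by (auto simp: comm_subalgebras_def)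
  qed
  have kc: "x * y = y * x" if hx: "h x = 0" for x y
  proof -
    define sx where "sx = x + cstar x"
    define wx where "wx = scaleC (-\<i>) (cstar x - x)"
    define sy where "sy = y + cstar y"
    define wy where "wy = scaleC (-\<i>) (cstar y - y)"
    have hs: "h sx = 0" "h wx = 0"
      by (simp_all add: sx_def wx_def sh_add[OF assms] sh_cstar[OF assms] sh_diff[OF assms] sh_scaleC[OF assms] hx)
    have sas: "cstar sx = sx" "cstar wx = wx" "cstar sy = sy" "cstar wy = wy"
      using decomp_sa by (auto simp: sx_def wx_def sy_def wy_def)
    have "sx * y = y * sx"
      using decomp_commute[of sx y] ksa[OF sas(1) sas(3) hs(1)] ksa[OF sas(1) sas(4) hs(1)]
      by (simp add: sy_def wy_def)
    moreover have "wx * y = y * wx"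
      using decomp_commute[of wx y] ksa[OF sas(2) sas(3) hs(2)] ksa[OF sas(2) sas(4) hs(2)]
      by (simp add: sy_def wy_def)
    ultimately have "y * x = x * y"
      using decomp_commute[of y x] by (simp add: sx_def wx_def)
    then show ?thesis by simp
  qed
  show "reflects_commutativity h"
    unfolding reflects_commutativity_def
  proof (intro allI impI)
    fix a b assume ab: "h a * h b = h b * h a"
    define c where "c = a * b - b * a"
    have hc: "h c = 0" using ab by (simp add: c_def sh_diff[OF assms] sh_mult[OF assms])
    have hcs: "h (cstar c) = 0" by (simp add: sh_cstar[OF assms] hc)
    have hca: "h (cstar c * a) = 0" by (simp add: sh_mult[OF assms] hcs)
    have "cstar c * a * b = b * (cstar c * a)" using kc[OF hca] by simp
    also have "\<dots> = (b * cstar c) * a" by (simp add: mult.assoc)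
    also have "\<dots> = cstar c * b * a" using kc[OF hcs, of b] by simp
    finally have "cstar c * c = 0" by (simp add: c_def right_diff_distrib mult.assoc)
    then have "norm c ^ 2 = 0" by (simp add: cstar_identity[symmetric])
    then have "c = 0" by simp
    then show "a * b = b * a" by (simp add: c_def)
  qed
qed

end
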